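(* Let $X\subseteq\mathbb{R}$ be an interval (bounded or unbounded) with $[0,1]\subset X$, let $\beta>0$ and $K>0$, and let $a\in C(X)$ satisfy $$\max_{x\in X}a(x)=a(0)>a(1)>0,\qquad \lim_{|x|\to\infty}a(x)=-\infty .$$ Assume that $$\inf_{\phi\in H^1(X)\setminus\{0\}}\mathcal{Q}(\phi)<0,\qquad \mathcal{Q}(\phi):=\frac{\beta\int_X|\phi'(x)|^2\,dx-\int_X a(x)\phi(x)^2\,dx}{\int_X\phi(x)^2\,dx}.$$ Consider the steady-state problem: find $\overline{s}_F:X\to\mathbb{R}$ with $$\beta\,\overline{s}_F''(x)+\Big(a(x)-\frac{\overline{S}_F}{K}\Big)\overline{s}_F(x)=0\ \ (x\in X),\qquad \overline{S}_F:=\int_X\overline{s}_F(x)\,dx,$$ $$\overline{s}_F(\cdot)>0,\qquad 0<\overline{S}_F<\infty,$$ together with zero Neumann boundary conditions at the endpoints of $X$ if $X$ is bounded. Then this problem has a unique solution, given by $$\overline{s}_F(x)=\overline{S}_F\,\psi(x)\quad\text{with}\quad \overline{S}_F=K\int_X a(x)\psi(x)\,dx,$$ where $\psi$ is the positive principal eigenfunction of $\mathcal{L}$ normalised by $\int_X\psi\,dx=1$.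
   Context: $\mathcal{L}:=\beta\frac{d^2}{dx^2}+a$ acts on functions on $X$ (with zero Neumann boundary conditions if $X$ is bounded). Its principal eigenpair $(\lambda,\psi)$ satisfies $\mathcal{L}[\psi]=-\lambda\psi$, with $\lambda=\inf_{\phi\in H^1(X)\setminus\{0\}}\mathcal{Q}(\phi)$ simple and $\psi$ the unique positive, smooth eigenfunction associated with $\lambda$, normalised so that $\int_X\psi\,dx=1$. *)

theory Defs
  imports "HOL-Analysis.Analysis"
begin

text \<open>One-dimensional Sobolev space H^1(X), in terms of a representative phi
  (absolutely continuous on compact subintervals of X) together with a weak
  derivative g: phi(y) - phi(x) is the integral of g over [x,y], and both phi and g
  are square integrable on X.\<close>
definition H1_pair :: "real set \<Rightarrow> (real \<Rightarrow> real) \<Rightarrow> (real \<Rightarrow> real) \<Rightarrow> bool" where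
  "H1_pair X phi g \<longleftrightarrow>
     (\<forall>x\<in>X. \<forall>y\<in>X. x \<le> y \<longrightarrow> (g has_integral (phi y - phi x)) {x..y}) \<and>
     (\<lambda>x. (phi x)^2) integrable_on X \<and> (\<lambda>x. (g x)^2) integrable_on X"

text \<open>Since a is bounded above, Q(phi) = +infinity whenever a*phi^2 is not integrable;
  such phi do not affect the infimum and are omitted.\<close>
definition rayleigh_values :: "real set \<Rightarrow> real \<Rightarrow> (real \<Rightarrow> real) \<Rightarrow> real set" where
  "rayleigh_values X \<beta> a =
     {(\<beta> * integral X (\<lambda>x. (g x)^2) - integral X (\<lambda>x. a x * (phi x)^2))
        / integral X (\<lambda>x. (phi x)^2) | phi g.
       H1_pair X phi g \<and> (\<lambda>x. a x * (phi x)^2) integrable_on X \<and>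
       integral X (\<lambda>x. (phi x)^2) \<noteq> 0}"

definition principal_value :: "real set \<Rightarrow> real \<Rightarrow> (real \<Rightarrow> real) \<Rightarrow> real" where
  "principal_value X \<beta> a = Inf (rayleigh_values X \<beta> a)"

text \<open>Classical (C^2 on X) solution of  beta s'' + (a - c) s = 0  on X, with zero
  Neumann condition at every finite endpoint of X (the boundary points of X):
  s' tends to 0 at such an endpoint (within X).\<close>
definition neumann_sol :: "real set \<Rightarrow> real \<Rightarrow> (real \<Rightarrow> real) \<Rightarrow> real \<Rightarrow> (real \<Rightarrow> real) \<Rightarrow> bool" where
  "neumann_sol X \<beta> a c s \<longleftrightarrow>
     (\<exists>s' s''.
        (\<forall>x\<in>X. (s has_real_derivative s' x) (at x within X) \<and>
                 (s' has_real_derivative s'' x) (at x within X) \<and>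
                 \<beta> * s'' x + (a x - c) * s x = 0) \<and>
        (\<forall>e\<in>frontier X. (s' \<longlongrightarrow> 0) (at e within X)))"

definition principal_eigenfunction :: "real set \<Rightarrow> real \<Rightarrow> (real \<Rightarrow> real) \<Rightarrow> (real \<Rightarrow> real) \<Rightarrow> bool" where
  "principal_eigenfunction X \<beta> a psi \<longleftrightarrow>
     neumann_sol X \<beta> a (- principal_value X \<beta> a) psi \<and>
     (\<forall>x\<in>X. psi x > 0) \<and> (\<exists>g. H1_pair X psi g) \<and>
     psi integrable_on X \<and> integral X psi = 1"

definition steady_state :: "real set \<Rightarrow> real \<Rightarrow> (real \<Rightarrow> real) \<Rightarrow> real \<Rightarrow> (real \<Rightarrow> real) \<Rightarrow> bool" where
  "steady_state X \<beta> a K s \<longleftrightarrow>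
     s integrable_on X \<and> (\<forall>x\<in>X. s x > 0) \<and> integral X s > 0 \<and>
     neumann_sol X \<beta> a (integral X s / K) s"

end

theory Submission
  imports Defs
begin

definition odesol :: "real set \<Rightarrow> real \<Rightarrow> (real \<Rightarrow> real) \<Rightarrow> real \<Rightarrow> (real \<Rightarrow> real) \<Rightarrow> (real \<Rightarrow> real) \<Rightarrow> (real \<Rightarrow> real) \<Rightarrow> bool" where
  "odesol X \<beta> a c u u' u'' \<longleftrightarrow> (\<forall>x\<in>X. (u has_real_derivative u' x) (at x within X) \<and>
                 (u' has_real_derivative u'' x) (at x within X) \<and>
                 \<beta> * u'' x + (a x - c) * u x = 0)"

definition neum :: "real set \<Rightarrow> (real \<Rightarrow> real) \<Rightarrow> bool" where
  "neum X u' \<longleftrightarrow> (\<forall>e\<in>frontier X. (u' \<longlongrightarrow> 0) (at e within X))"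

lemma neumann_sol_iff: "neumann_sol X \<beta> a c s \<longleftrightarrow> (\<exists>s' s''. odesol X \<beta> a c s s' s'' \<and> neum X s')"
  unfolding neumann_sol_def odesol_def neum_def by blast

lemma mem_uminus [simp]: "(x::real) \<in> uminus ` S \<longleftrightarrow> - x \<in> S"
  by (metis image_iff minus_minus)

lemma reflect_integral_UNIV:
  fixes f :: "real \<Rightarrow> real"
  assumes "(f has_integral i) UNIV"
  shows "((\<lambda>x. f (- x)) has_integral i) UNIV"
proof -
  have nc: "\<not> (\<exists>a b. (UNIV::real set) = cbox a b)"
    by (metis bounded_cbox not_bounded_UNIV)
  have goal: "\<forall>e>0. \<exists>B>0. \<forall>a b. ball 0 B \<subseteq> cbox a b \<longrightarrow>
      (\<exists>z. ((\<lambda>x. f (- x)) has_integral z) (cbox a b) \<and> norm (z - i) < e)"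
  proof (intro allI impI)
    fix e :: real assume e: "e > 0"
    obtain B where B: "B > 0" "\<forall>a b. ball 0 B \<subseteq> cbox a b \<longrightarrow>
      (\<exists>z. ((\<lambda>x. if x \<in> UNIV then f(x) else 0) has_integral z) (cbox a b) \<and> norm(z - i) < e)"
      using has_integral_altD[OF assms nc e] by blast
    have B2: "\<forall>a b. ball 0 B \<subseteq> cbox a b \<longrightarrow>
      (\<exists>z. (f has_integral z) (cbox a b) \<and> norm(z - i) < e)" using B(2) by simp
    have "\<forall>a b. ball 0 B \<subseteq> cbox a b \<longrightarrow>
      (\<exists>z. ((\<lambda>x. f (- x)) has_integral z) (cbox a b) \<and> norm (z - i) < e)"
    proof (intro allI impI)
      fix a b :: real assume ab: "ball 0 B \<subseteq> cbox a b"
      have "ball 0 B \<subseteq> cbox (-b) (-a)"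
      proof
        fix x :: real assume "x \<in> ball 0 B"
        then have "-x \<in> ball 0 B" by simp
        then have "-x \<in> cbox a b" using ab by blast
        then show "x \<in> cbox (-b) (-a)" by auto
      qed
      then have "\<exists>z. (f has_integral z) (cbox (-b) (-a)) \<and> norm (z - i) < e"
        using B2 by blast
      then obtain z where z: "(f has_integral z) (cbox (-b) (-a))" "norm (z - i) < e"
        by blast
      have "((\<lambda>x. f (- x)) has_integral z) (cbox a b)"
        using z(1) has_integral_reflect_real[where f=f and i=z and a="-b" and b="-a"] by simp
      then show "\<exists>z. ((\<lambda>x. f (- x)) has_integral z) (cbox a b) \<and> norm (z - i) < e"
        using z(2) by blast
    qed
    then show "\<exists>B>0. \<forall>a b. ball 0 B \<subseteq> cbox a b \<longrightarrow>
      (\<exists>z. ((\<lambda>x. f (- x)) has_integral z) (cbox a b) \<and> norm (z - i) < e)"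
      using B(1) by blast
  qed
  show ?thesis
    by (subst has_integral_alt) (use goal nc in simp)
qed

lemma reflect_integral:
  fixes f :: "real \<Rightarrow> real"
  assumes "(f has_integral i) S"
  shows "((\<lambda>x. f (- x)) has_integral i) (uminus ` S)"
proof -
  have "((\<lambda>x. if x \<in> S then f x else 0) has_integral i) UNIV"
    using assms has_integral_restrict_UNIV[where s=S and f=f and i=i] by simp
  then have "((\<lambda>x. (\<lambda>x. if x \<in> S then f x else 0) (- x)) has_integral i) UNIV"
    by (rule reflect_integral_UNIV)
  then have "((\<lambda>x. if x \<in> uminus ` S then f (- x) else 0) has_integral i) UNIV"
    by simp
  then show ?thesis using has_integral_restrict_UNIV[where s="uminus ` S" and f="\<lambda>x. f (- x)" and i=i] by simp
qed

lemma lim_reflect: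
  fixes f :: "real \<Rightarrow> real"
  assumes "(f \<longlongrightarrow> l) (at (-e) within X)"
  shows "((\<lambda>y. f (- y)) \<longlongrightarrow> l) (at e within uminus ` X)"
proof -
  have "filterlim uminus (at (-e) within X) (at e within uminus ` X)"
  proof (rule filterlim_at_withinI)
    show "((\<lambda>x. - x) \<longlongrightarrow> - e) (at e within uminus ` X)"
      by (intro tendsto_intros)
    show "\<forall>\<^sub>F x in at e within uminus ` X. - x \<in> X - {- e}"
      unfolding eventually_at_filter by (auto intro!: always_eventually)
  qed
  from filterlim_compose[OF assms this] show ?thesis by (simp add: o_def)
qed

lemma frontier_reflect: "e \<in> frontier (uminus ` X) \<Longrightarrow> - e \<in> frontier (X::real set)"
proof -
  assume "e \<in> frontier (uminus ` X)"
  then have "e \<in> closure (uminus ` X)" "e \<notin> interior (uminus ` X)" by (auto simp: frontier_def)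
  moreover have "closure (uminus ` X) = uminus ` closure X"
    by (simp add: closure_injective_linear_image linear_uminus)
  ultimately show ?thesis by (auto simp: frontier_def interior_negations)
qed

lemma reflect_ode:
  assumes "odesol X \<beta> a c u u' u''"
  shows "odesol (uminus ` X) \<beta> (\<lambda>x. a (- x)) c (\<lambda>x. u (- x)) (\<lambda>x. - u' (- x)) (\<lambda>x. u'' (- x))"
  unfolding odesol_def
proof
  fix y assume y: "y \<in> uminus ` X"
  then have my: "-y \<in> X" by auto
  have img: "uminus ` uminus ` X = X" by (auto simp: image_iff)
  have d1: "(u has_real_derivative u' (-y)) (at (uminus y) within uminus ` (uminus ` X))"
    using assms my img unfolding odesol_def by auto
  have d2: "(u' has_real_derivative u'' (-y)) (at (uminus y) within uminus ` (uminus ` X))"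
    using assms my img unfolding odesol_def by auto
  have dm: "(uminus has_real_derivative -1) (at y within uminus ` X)"
    by (auto intro!: derivative_eq_intros)
  have "(u \<circ> uminus has_real_derivative u' (-y) * -1) (at y within uminus ` X)"
    using DERIV_image_chain[OF d1 dm] .
  moreover have "(u' \<circ> uminus has_real_derivative u'' (-y) * -1) (at y within uminus ` X)"
    using DERIV_image_chain[OF d2 dm] .
  from DERIV_minus[OF this] have "((\<lambda>x. - u' (- x)) has_real_derivative u'' (-y)) (at y within uminus ` X)"
    by (simp add: o_def)
  moreover have "\<beta> * u'' (- y) + (a (- y) - c) * u (- y) = 0" using assms my unfolding odesol_def by auto
  ultimately show "((\<lambda>x. u (- x)) has_real_derivative - u' (- y)) (at y within uminus ` X) \<and>
         ((\<lambda>x. - u' (- x)) has_real_derivative u'' (- y)) (at y within uminus ` X) \<and>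
         \<beta> * u'' (- y) + (a (- y) - c) * u (- y) = 0"
    by (simp add: o_def)
qed

lemma reflect_neum:
  assumes "neum X u'"
  shows "neum (uminus ` X) (\<lambda>x. - u' (- x))"
  unfolding neum_def
proof
  fix e assume "e \<in> frontier (uminus ` X)"
  then have "- e \<in> frontier X" by (rule frontier_reflect)
  then have "(u' \<longlongrightarrow> 0) (at (-e) within X)" using assms unfolding neum_def by auto
  then have "((\<lambda>y. u' (- y)) \<longlongrightarrow> 0) (at e within uminus ` X)" by (rule lim_reflect)
  then show "((\<lambda>x. - u' (- x)) \<longlongrightarrow> 0) (at e within uminus ` X)"
    using tendsto_minus by fastforce
qed

lemma at_left_le_within:
  fixes X :: "real set"
  assumes "p < b" "{p<..<b} \<subseteq> X"
  shows "at_left b \<le> at b within X"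
  unfolding le_filter_def
proof (intro allI impI)
  fix P assume "eventually P (at b within X)"
  then have "eventually (\<lambda>x. x \<noteq> b \<longrightarrow> x \<in> X \<longrightarrow> P x) (nhds b)" by (simp add: eventually_at_filter)
  then have "eventually (\<lambda>x. x \<noteq> b \<longrightarrow> x \<in> {..<b} \<longrightarrow> (x \<in> X \<longrightarrow> P x)) (nhds b)"
    by (rule eventually_mono) auto
  then have "eventually (\<lambda>x. x \<in> X \<longrightarrow> P x) (at_left b)" by (simp add: eventually_at_filter)
  moreover have "eventually (\<lambda>x. x \<in> {p<..<b}) (at_left b)" using eventually_at_left_real assms by blast
  ultimately have "eventually (\<lambda>x. (x \<in> X \<longrightarrow> P x) \<and> x \<in> {p<..<b}) (at_left b)"
    by (rule eventually_conj)
  then show "eventually P (at_left b)" by (rule eventually_mono) (use assms(2) in blast)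
qed

lemma at_right_le_within:
  fixes X :: "real set"
  assumes "p < b" "{p<..<b} \<subseteq> X"
  shows "at_right p \<le> at p within X"
  unfolding le_filter_def
proof (intro allI impI)
  fix P assume "eventually P (at p within X)"
  then have "eventually (\<lambda>x. x \<noteq> p \<longrightarrow> x \<in> X \<longrightarrow> P x) (nhds p)" by (simp add: eventually_at_filter)
  then have "eventually (\<lambda>x. x \<noteq> p \<longrightarrow> x \<in> {p<..} \<longrightarrow> (x \<in> X \<longrightarrow> P x)) (nhds p)"
    by (rule eventually_mono) auto
  then have "eventually (\<lambda>x. x \<in> X \<longrightarrow> P x) (at_right p)" by (simp add: eventually_at_filter)
  moreover have "eventually (\<lambda>x. x \<in> {p<..<b}) (at_right p)" using eventually_at_right_real assms by blast
  ultimately have "eventually (\<lambda>x. (x \<in> X \<longrightarrow> P x) \<and> x \<in> {p<..<b}) (at_right p)"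
    by (rule eventually_conj)
  then show "eventually P (at_right p)" by (rule eventually_mono) (use assms(2) in blast)
qed

lemma cont_of_deriv:
  assumes "\<forall>x\<in>X. (f has_real_derivative f' x) (at x within X)"
  shows "continuous_on X f"
  unfolding continuous_on_eq_continuous_within
proof
  fix x assume "x \<in> X"
  then show "continuous (at x within X) f" using assms DERIV_continuous by blast
qed

lemma interval_sub:
  assumes "is_interval (X::real set)" "x \<in> X" "y \<in> X"
  shows "{x..y} \<subseteq> X"
proof
  fix z assume "z \<in> {x..y}"
  then show "z \<in> X" using assms(1)[unfolded is_interval_1, rule_format, OF assms(2,3)] by auto
qed

lemma interior_sub:
  assumes "is_interval (X::real set)" "x \<in> X" "y \<in> X"
  shows "{x<..<y} \<subseteq> interior X"
proof -
  have "{x<..<y} \<subseteq> X" using interval_sub[OF assms] by auto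
  then show ?thesis by (rule interior_maximal) simp
qed

lemma deriv_interior:
  assumes "(f has_real_derivative d) (at x within X)" "x \<in> interior X"
  shows "(f has_real_derivative d) (at x)"
  using assms(1) at_within_interior[OF assms(2)] by simp

lemma mono_within:
  fixes f f' :: "real \<Rightarrow> real"
  assumes iv: "is_interval X" and d: "\<forall>x\<in>X. (f has_real_derivative f' x) (at x within X)"
    and nn: "\<forall>x\<in>X. f' x \<ge> 0" and x: "x \<in> X" "y \<in> X" "x \<le> y"
  shows "f x \<le> f y"
proof (rule DERIV_nonneg_imp_increasing_open[OF \<open>x \<le> y\<close>])
  show "continuous_on {x..y} f"
    using continuous_on_subset[OF cont_of_deriv[OF d] interval_sub[OF iv x(1,2)]] .
  fix z assume z: "x < z" "z < y"
  then have "z \<in> interior X" using interior_sub[OF iv x(1,2)] by auto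
  moreover have "z \<in> X" using z interval_sub[OF iv x(1,2)] by auto
  ultimately show "\<exists>w. (f has_real_derivative w) (at z) \<and> 0 \<le> w"
    using deriv_interior[OF d[rule_format, OF \<open>z \<in> X\<close>] \<open>z \<in> interior X\<close>] nn \<open>z \<in> X\<close> by blast
qed

lemma smono_within:
  fixes f f' :: "real \<Rightarrow> real"
  assumes iv: "is_interval X" and d: "\<forall>x\<in>X. (f has_real_derivative f' x) (at x within X)"
    and nn: "\<forall>x\<in>X. f' x > 0" and x: "x \<in> X" "y \<in> X" "x < y"
  shows "f x < f y"
proof (rule DERIV_pos_imp_increasing_open[OF \<open>x < y\<close>])
  show "continuous_on {x..y} f"
    using continuous_on_subset[OF cont_of_deriv[OF d] interval_sub[OF iv x(1,2)]] .
  fix z assume z: "x < z" "z < y"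
  then have "z \<in> interior X" using interior_sub[OF iv x(1,2)] by auto
  moreover have "z \<in> X" using z interval_sub[OF iv x(1,2)] by auto
  ultimately show "\<exists>w. (f has_real_derivative w) (at z) \<and> 0 < w"
    using deriv_interior[OF d[rule_format, OF \<open>z \<in> X\<close>] \<open>z \<in> interior X\<close>] nn \<open>z \<in> X\<close> by blast
qed

definition rfilt :: "real set \<Rightarrow> real filter" where
  "rfilt X = (if bdd_above X then at (Sup X) within X else at_top)"

lemma right_end:
  fixes X :: "real set" and a u u' u'' :: "real \<Rightarrow> real"
  assumes iv: "is_interval X" and pq: "p < q" "{p..q} \<subseteq> X" and \<beta>: "\<beta> > 0"
    and ode: "odesol X \<beta> a c u u' u''" and nm: "neum X u'"
    and pos: "\<forall>x\<in>X. u x > 0"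
    and intb: "\<And>l r. {l..r} \<subseteq> X \<Longrightarrow> integral {l..r} u \<le> C"
    and aneg: "\<And>M. \<exists>R. \<forall>x\<in>X. x \<ge> R \<longrightarrow> a x \<le> M"
  shows "(rfilt X \<noteq> bot \<and> (\<forall>r<q. eventually (\<lambda>x. x \<in> X \<and> r < x) (rfilt X)) \<and> (u' \<longlongrightarrow> 0) (rfilt X) \<and>
            (\<exists>B. eventually (\<lambda>x. \<bar>u x\<bar> \<le> B) (rfilt X))) \<and>
         (u'' has_integral (- u' p)) (X \<inter> {p..})"
proof -
  have du: "\<forall>x\<in>X. (u has_real_derivative u' x) (at x within X)"
   and du': "\<forall>x\<in>X. (u' has_real_derivative u'' x) (at x within X)"
   and eq: "\<forall>x\<in>X. \<beta> * u'' x + (a x - c) * u x = 0"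
    using ode unfolding odesol_def by auto
  have cu: "continuous_on X u" and cu': "continuous_on X u'"
    using cont_of_deriv du du' by auto
  have pX: "p \<in> X" and qX: "q \<in> X" using pq by auto
  have lim_p: "(u' \<longlongrightarrow> u' p) (at_right p)"
  proof -
    have "(u' \<longlongrightarrow> u' p) (at p within X)"
      using cu' pX continuous_on_def by blast
    moreover have "{p<..<q} \<subseteq> X" using pq by auto
    ultimately show ?thesis using tendsto_mono at_right_le_within pq(1) by blast
  qed
  show ?thesis
  proof (cases "bdd_above X")
    case True
    define b where "b = Sup X"
    have Xb: "\<forall>x\<in>X. x \<le> b" using True cSup_upper b_def by blast
    have qb: "q \<le> b" using Xb qX by auto
    have pb: "p < b" using pq qb by auto
    have sub: "{p..<b} \<subseteq> X"
    proof
      fix x assume x: "x \<in> {p..<b}"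
      then obtain y where y: "y \<in> X" "x < y" using less_cSup_iff[of X x] True pX b_def by auto
      show "x \<in> X" using interval_sub[OF iv pX y(1)] x y by auto
    qed
    have intsub: "{p<..<b} \<subseteq> interior X" by (rule interior_maximal) (use sub in auto)
    have bfr: "b \<in> frontier X"
    proof -
      have "b \<in> closure X" using closure_contains_Sup[of X] True pX b_def by auto
      moreover have "b \<notin> interior X"
      proof
        assume "b \<in> interior X"
        then obtain e where e: "e > 0" "ball b e \<subseteq> X" using mem_interior by blast
        then have "b + e/2 \<in> X" by (auto simp: dist_real_def)
        then have "b + e/2 \<le> b" using Xb by blast
        then show False using e by linarith
      qed
      ultimately show ?thesis by (simp add: frontier_def)
    qed
    have limb: "(u' \<longlongrightarrow> 0) (at b within X)" using nm bfr unfolding neum_def by auto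
    have psub: "{p<..<b} \<subseteq> X" using sub by auto
    have lblim: "(u' \<longlongrightarrow> 0) (at_left b)"
      using tendsto_mono[OF at_left_le_within[OF pb psub] limb] .
    define v where "v x = (if x < b then u' x else 0)" for x
    have vcont: "continuous_on {p..b} v"
    proof (rule continuous_on_IccI)
      show "(v \<longlongrightarrow> v p) (at_right p)"
      proof -
        have "eventually (\<lambda>x. u' x = v x) (at_right p)"
          using eventually_at_right_real[OF pb] by eventually_elim (auto simp: v_def)
        moreover have "(u' \<longlongrightarrow> v p) (at_right p)" using lim_p pb by (simp add: v_def)
        ultimately show ?thesis using Lim_transform_eventually by blast
      qed
      show "(v \<longlongrightarrow> v b) (at_left b)"
      proof -
        have "eventually (\<lambda>x. u' x = v x) (at_left b)"
          using eventually_at_left_real[OF pb] by eventually_elim (auto simp: v_def)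
        moreover have "(u' \<longlongrightarrow> v b) (at_left b)" using lblim by (simp add: v_def)
        ultimately show ?thesis using Lim_transform_eventually by blast
      qed
      fix x assume x: "p < x" "x < b"
      then have xi: "x \<in> interior X" using intsub by auto
      have "(u' has_real_derivative u'' x) (at x)"
        using deriv_interior du' xi interior_subset by blast
      then have "isCont u' x" by (rule DERIV_isCont)
      then have "(u' \<longlongrightarrow> v x) (at x)" using x by (simp add: v_def isCont_def)
      moreover have "eventually (\<lambda>y. u' y = v y) (at x)"
      proof -
        have "eventually (\<lambda>y. y < b) (at x)" using order_tendstoD(2)[OF tendsto_ident_at \<open>x < b\<close>] by blast
        then show ?thesis by (rule eventually_mono) (simp add: v_def)
      qed
      ultimately show "(v \<longlongrightarrow> v x) (at x)" using Lim_transform_eventually by blast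
    qed (rule pb)
    have ftc: "(u'' has_integral (v b - v p)) {p..b}"
    proof (rule fundamental_theorem_of_calculus_interior_strong[where S="{}"])
      fix x assume "x \<in> {p<..<b} - {}"
      then have x: "p < x" "x < b" by auto
      then have xi: "x \<in> interior X" using intsub by auto
      have "(u' has_real_derivative u'' x) (at x)"
        using deriv_interior du' xi interior_subset by blast
      then have "(v has_real_derivative u'' x) (at x)"
        by (rule has_field_derivative_transform_within_open[where S="{p<..<b}"]) (use x in \<open>auto simp: v_def\<close>)
      then show "(v has_vector_derivative u'' x) (at x)"
        by (simp add: has_real_derivative_iff_has_vector_derivative)
    qed (use vcont pb in auto)
    have "v b - v p = - u' p" using pb by (simp add: v_def)
    with ftc have ftc': "(u'' has_integral (- u' p)) {p..b}" by simp
    have XI: "X \<inter> {p..} \<subseteq> {p..b}" "{p..b} - (X \<inter> {p..}) \<subseteq> {b}" using Xb sub by auto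
    have int: "(u'' has_integral (- u' p)) (X \<inter> {p..})"
    proof -
      have "negligible {x \<in> {p..b} - X \<inter> {p..}. u'' x \<noteq> 0}"
        by (rule negligible_subset[of "{b}"]) (use XI in auto)
      moreover have "{x \<in> X \<inter> {p..} - {p..b}. u'' x \<noteq> 0} = {}"
        using XI(1) by blast
      moreover have "negligible {x \<in> X \<inter> {p..} - {p..b}. u'' x \<noteq> 0}"
        by (subst calculation(2)) simp
      ultimately show ?thesis using has_integral_spike_set_eq ftc' by blast
    qed
    obtain M where M: "\<forall>x\<in>{p..b}. \<bar>v x\<bar> \<le> M"
    proof -
      have "compact (v ` {p..b})" using vcont compact_continuous_image by blast
      then have "bounded (v ` {p..b})" by (rule compact_imp_bounded)
      then obtain M where "\<forall>y\<in>v ` {p..b}. norm y \<le> M" using bounded_iff by blast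
      then show ?thesis using that by auto
    qed
    have M0: "M \<ge> 0" using M pb by force
    have ubd: "\<forall>x\<in>{p..<b}. \<bar>u x\<bar> \<le> \<bar>u p\<bar> + M * (b - p)"
    proof
      fix x assume x: "x \<in> {p..<b}"
      have "norm (u x - u p) \<le> M * norm (x - p)"
      proof (rule field_differentiable_bound[where S="{p..<b}" and f'=u'])
        show "convex {p..<b}" by (rule convex_real_interval)
        fix z assume z: "z \<in> {p..<b}"
        then have zX: "z \<in> X" using sub by blast
        have "{p..<b} \<subseteq> X" using sub .
        then show "(u has_real_derivative u' z) (at z within {p..<b})"
          using has_field_derivative_subset[OF du[rule_format, OF zX]] by blast
        have "\<bar>v z\<bar> \<le> M" using M z by auto
        then show "norm (u' z) \<le> M" using z by (simp add: v_def)
      qed (use x pb in auto)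
      moreover have "M * norm (x - p) \<le> M * (b - p)" using x M0 by (intro mult_left_mono) auto
      ultimately show "\<bar>u x\<bar> \<le> \<bar>u p\<bar> + M * (b - p)" by auto
    qed
    have "at b within X \<noteq> bot"
    proof
      assume "at b within X = bot"
      moreover have "at_left b \<le> at b within X" by (rule at_left_le_within[OF pb psub])
      ultimately have "at_left b \<le> bot" by simp
      then show False by (simp add: bot_unique)
    qed
    moreover have "\<forall>r<q. eventually (\<lambda>x. x \<in> X \<and> r < x) (at b within X)"
    proof (intro allI impI)
      fix r assume "r < q"
      then have "r < b" using qb by auto
      then have "eventually (\<lambda>x. r < x) (at b within X)"
        using order_tendstoD(1)[OF tendsto_ident_at] by blast
      moreover have "eventually (\<lambda>x. x \<in> X) (at b within X)" by (simp add: eventually_at_filter)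
      ultimately show "eventually (\<lambda>x. x \<in> X \<and> r < x) (at b within X)" by eventually_elim auto
    qed
    moreover have "eventually (\<lambda>x. \<bar>u x\<bar> \<le> \<bar>u p\<bar> + M * (b - p)) (at b within X)"
    proof -
      have "eventually (\<lambda>x. p < x) (at b within X)"
        using order_tendstoD(1)[OF tendsto_ident_at pb] by blast
      then show ?thesis unfolding eventually_at_filter
        by (rule eventually_mono) (use ubd Xb in force)
    qed
    moreover have rf: "rfilt X = at b within X" by (simp add: rfilt_def True b_def)
    ultimately show ?thesis using limb int unfolding rf by blast
  next
    case False
    have unb: "\<exists>y\<in>X. y > M" for M using False unfolding bdd_above_def using not_le by blast
    have supX: "{p..} \<subseteq> X"
    proof
      fix x assume x: "x \<in> {p..}"
      obtain y where y: "y \<in> X" "y > x" using unb by blast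
      then show "x \<in> X" using interval_sub[OF iv pX y(1)] x by auto
    qed
    have intX: "{p<..} \<subseteq> interior X" by (rule interior_maximal) (use supX in auto)
    have XI: "X \<inter> {p..} = {p..}" using supX by auto
    obtain R1 where R1: "\<forall>x\<in>X. x \<ge> R1 \<longrightarrow> a x \<le> c - 1" using aneg[of "c - 1"] by blast
    define R0 where "R0 = max R1 (p + 1)"
    have R0p: "R0 > p" by (simp add: R0_def)
    have Du: "(u has_real_derivative u' x) (at x)" if "x > p" for x
    proof -
      have "x \<in> X" "x \<in> interior X" using that supX intX by auto
      then show ?thesis using du deriv_interior by blast
    qed
    have Du': "(u' has_real_derivative u'' x) (at x)" if "x > p" for x
    proof -
      have "x \<in> X" "x \<in> interior X" using that supX intX by auto
      then show ?thesis using du' deriv_interior by blast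
    qed
    have u''pos: "u'' x > 0" if x: "x \<ge> R0" for x
    proof -
      have xX: "x \<in> X" using supX R0p x by auto
      have "a x \<le> c - 1" using R1 xX x by (auto simp: R0_def)
      moreover have "u x > 0" using pos xX by auto
      moreover have "\<beta> * u'' x = (c - a x) * u x" using eq xX by (auto simp: algebra_simps)
      moreover have "c - a x > 0" using \<open>a x \<le> c - 1\<close> by linarith
      ultimately have "\<beta> * u'' x > 0" by simp
      then show "u'' x > 0" using \<beta> by (simp add: zero_less_mult_iff)
    qed
    have u'mono: "u' x \<le> u' y" if "R0 \<le> x" "x \<le> y" for x y
    proof (rule DERIV_nonneg_imp_nondecreasing[OF \<open>x \<le> y\<close>])
      fix t assume "x \<le> t" "t \<le> y"
      then show "\<exists>d. (u' has_real_derivative d) (at t) \<and> d \<ge> 0"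
        using Du'[of t] u''pos[of t] that R0p \<open>x \<le> t\<close> by (intro exI[of _ "u'' t"]) auto
    qed
    have u'nonpos: "u' x \<le> 0" if x0: "x \<ge> R0" for x
    proof (rule ccontr)
      assume x0': "\<not> u' x \<le> 0"
      have x0X: "x \<in> X" using x0 supX R0p by auto
      define m where "m = u x"
      have m: "m > 0" using pos x0X m_def by auto
      have ugt: "u y \<ge> m" if y: "y \<ge> x" for y
        unfolding m_def
      proof (rule DERIV_nonneg_imp_nondecreasing[OF y])
        fix t assume t: "x \<le> t" "t \<le> y"
        have "u' t \<ge> u' x" using u'mono x0 t by blast
        then show "\<exists>d. (u has_real_derivative d) (at t) \<and> d \<ge> 0"
          using Du[of t] x0 x0' t R0p by (intro exI[of _ "u' t"]) auto
      qed
      define T where "T = (\<bar>C\<bar> + 1) / m"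
      have T: "T > 0" using m by (simp add: T_def)
      have sub2: "{x..x+T} \<subseteq> X" using supX x0 R0p by auto
      have ui: "u integrable_on {x..x+T}"
        by (rule integrable_continuous_interval[OF continuous_on_subset[OF cu sub2]])
      have "integral {x..x+T} (\<lambda>t. m) \<le> integral {x..x+T} u"
        by (rule integral_le) (use ui ugt in auto)
      moreover have "integral {x..x+T} (\<lambda>t. m) = T * m" using T by simp
      moreover have "T * m = \<bar>C\<bar> + 1" using m by (simp add: T_def)
      moreover have "integral {x..x+T} u \<le> C" using intb sub2 by blast
      ultimately show False by linarith
    qed
    have lim0: "(u' \<longlongrightarrow> 0) at_top"
    proof (rule tendstoI)
      fix e :: real assume e: "e > 0"
      have "\<exists>N. \<forall>x\<ge>N. u' x > -e"
      proof (rule ccontr)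
        assume "\<not> (\<exists>N. \<forall>x\<ge>N. u' x > -e)"
        then have bad: "\<forall>N. \<exists>x\<ge>N. u' x \<le> -e" using not_less by blast
        have small: "u' y \<le> -e" if y: "y \<ge> R0" for y
        proof -
          obtain x where "x \<ge> y" "u' x \<le> -e" using bad by blast
          then show "u' y \<le> -e" using u'mono[OF y] by force
        qed
        define Y where "Y = R0 + (\<bar>u R0\<bar> + 1) / e"
        have Y: "R0 \<le> Y" using e by (simp add: Y_def)
        have "(\<lambda>x. u x + e * x) Y \<le> (\<lambda>x. u x + e * x) R0"
        proof (rule DERIV_nonpos_imp_nonincreasing[OF Y])
          fix t assume t: "R0 \<le> t" "t \<le> Y"
          have "((\<lambda>x. u x + e * x) has_real_derivative u' t + e * 1) (at t)"
            using t R0p by (intro DERIV_add Du DERIV_cmult DERIV_ident) auto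
          then show "\<exists>d. ((\<lambda>x. u x + e * x) has_real_derivative d) (at t) \<and> d \<le> 0"
            using small[OF t(1)] by auto
        qed
        then have "u Y \<le> u R0 - e * (Y - R0)" by (simp add: algebra_simps)
        moreover have "e * (Y - R0) = \<bar>u R0\<bar> + 1" using e by (simp add: Y_def)
        moreover have "u Y > 0"
        proof -
          have "Y \<in> {p..}" using Y R0p by simp
          then have "Y \<in> X" using supX by blast
          then show ?thesis using pos by blast
        qed
        ultimately show False by linarith
      qed
      then obtain N where N: "\<forall>x\<ge>N. u' x > -e" by blast
      show "eventually (\<lambda>x. dist (u' x) 0 < e) at_top"
        unfolding eventually_at_top_linorder
      proof (intro exI[of _ "max N R0"] allI impI)
        fix x :: real assume "max N R0 \<le> x"
        then have "u' x > -e" "u' x \<le> 0" using N u'nonpos by auto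
        then show "dist (u' x) 0 < e" by (simp add: dist_real_def)
      qed
    qed
    have ubd: "eventually (\<lambda>x. \<bar>u x\<bar> \<le> u R0) at_top"
      unfolding eventually_at_top_linorder
    proof (intro exI[of _ R0] allI impI)
      fix x assume x: "x \<ge> R0"
      have "u x \<le> u R0"
      proof (rule DERIV_nonpos_imp_nonincreasing[OF x])
        fix t assume "R0 \<le> t" "t \<le> x"
        then show "\<exists>d. (u has_real_derivative d) (at t) \<and> d \<le> 0"
          using Du[of t] u'nonpos[of t] R0p by (intro exI[of _ "u' t"]) auto
      qed
      moreover have "u x > 0"
      proof -
        have "x \<in> {p..}" using x R0p by simp
        then have "x \<in> X" using supX by blast
        then show ?thesis using pos by blast
      qed
      ultimately show "\<bar>u x\<bar> \<le> u R0" by auto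
    qed
    have ev: "\<forall>r<q. eventually (\<lambda>x. x \<in> X \<and> r < x) at_top"
    proof (intro allI impI)
      fix r assume "r < q"
      show "eventually (\<lambda>x. x \<in> X \<and> r < x) at_top"
        unfolding eventually_at_top_linorder
        by (intro exI[of _ "max p r + 1"]) (use supX in auto)
    qed
    have FTk: "(u'' has_integral (u' t - u' s)) {s..t}" if st: "p \<le> s" "s \<le> t" for s t
    proof (rule fundamental_theorem_of_calculus[OF st(2)])
      have sub3: "{s..t} \<subseteq> X" using supX st by auto
      fix x assume x: "x \<in> {s..t}"
      then have "x \<in> X" using sub3 by auto
      then have "(u' has_real_derivative u'' x) (at x within {s..t})"
        using has_field_derivative_subset[OF du'[rule_format, OF \<open>x\<in>X\<close>] sub3] by blast
      then show "(u' has_vector_derivative u'' x) (at x within {s..t})"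
        by (simp add: has_real_derivative_iff_has_vector_derivative)
    qed
    have I1: "(u'' has_integral (u' R0 - u' p)) {p..R0}" using FTk R0p by simp
    define f where "f k x = (if x \<in> {R0..R0 + real k} then u'' x else 0)" for k x
    have fint: "(f k has_integral (u' (R0 + real k) - u' R0)) {R0..}" for k
    proof -
      have "(u'' has_integral (u' (R0 + real k) - u' R0)) {R0..R0 + real k}" using FTk R0p by simp
      then show ?thesis unfolding f_def by (subst has_integral_restrict) auto
    qed
    have seqlim: "((\<lambda>k. u' (R0 + real k)) \<longlongrightarrow> 0) sequentially"
    proof -
      have "filterlim (\<lambda>k. R0 + real k) at_top sequentially"
        by (rule filterlim_tendsto_add_at_top[OF tendsto_const filterlim_real_sequentially])
      from filterlim_compose[OF lim0 this] show ?thesis by (simp add: o_def)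
    qed
    have conv: "((\<lambda>k. integral {R0..} (f k)) \<longlongrightarrow> 0 - u' R0) sequentially"
    proof -
      have eqf: "(\<lambda>k. integral {R0..} (f k)) = (\<lambda>k. u' (R0 + real k) - u' R0)"
        using fint integral_unique by blast
      have "((\<lambda>k. u' (R0 + real k) - u' R0) \<longlongrightarrow> 0 - u' R0) sequentially"
        by (rule tendsto_diff[OF seqlim tendsto_const])
      then show ?thesis unfolding eqf .
    qed
    have mc: "u'' integrable_on {R0..} \<and> ((\<lambda>k. integral {R0..} (f k)) \<longlongrightarrow> integral {R0..} u'') sequentially"
    proof (rule monotone_convergence_increasing)
      show "f k integrable_on {R0..}" for k using fint by blast
      show "f k x \<le> f (Suc k) x" if "x \<in> {R0..}" for k x
        using u''pos[of x] that by (auto simp: f_def less_imp_le)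
      show "((\<lambda>k. f k x) \<longlongrightarrow> u'' x) sequentially" if x: "x \<in> {R0..}" for x
      proof -
        have "eventually (\<lambda>k. f k x = u'' x) sequentially"
          unfolding eventually_sequentially
        proof (intro exI[of _ "nat \<lceil>x - R0\<rceil>"] allI impI)
          fix k assume "nat \<lceil>x - R0\<rceil> \<le> k"
          then have "real (nat \<lceil>x - R0\<rceil>) \<le> real k" by simp
          moreover have "x - R0 \<le> real (nat \<lceil>x - R0\<rceil>)" by (rule real_nat_ceiling_ge)
          ultimately show "f k x = u'' x" using x by (auto simp: f_def)
        qed
        then show ?thesis by (rule tendsto_eventually)
      qed
      show "bounded (range (\<lambda>k. integral {R0..} (f k)))"
        using conv by (rule convergent_imp_bounded)
    qed
    have "integral {R0..} u'' = 0 - u' R0"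
      using LIMSEQ_unique[OF conjunct2[OF mc] conv] .
    moreover have "(u'' has_integral integral {R0..} u'') {R0..}" using integrable_integral[OF conjunct1[OF mc]] .
    ultimately have I2: "(u'' has_integral (- u' R0)) {R0..}" by simp
    have neg: "negligible ({p..R0} \<inter> {R0..})"
    proof -
      have "{p..R0} \<inter> {R0..} = {R0}" using R0p by auto
      then show ?thesis by simp
    qed
    have I: "(u'' has_integral (u' R0 - u' p + - u' R0)) ({p..R0} \<union> {R0..})"
      by (rule has_integral_Un[OF I1 I2 neg])
    have U: "{p..R0} \<union> {R0..} = {p..}" using R0p by auto
    have int: "(u'' has_integral (- u' p)) (X \<inter> {p..})" using I unfolding U XI by simp
    have "at_top \<noteq> (bot :: real filter)" by simp
    moreover have rf: "rfilt X = at_top" by (simp add: rfilt_def False)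
    ultimately show ?thesis using ev lim0 ubd int unfolding rf by blast
  qed
qed

lemma bdd_mult_zero:
  fixes f g :: "'b \<Rightarrow> real"
  assumes g: "(g \<longlongrightarrow> 0) F" and f: "eventually (\<lambda>x. \<bar>f x\<bar> \<le> B) F"
  shows "((\<lambda>x. f x * g x) \<longlongrightarrow> 0) F"
proof (rule tendsto_0_le[OF g, of _ B])
  show "eventually (\<lambda>x. norm (f x * g x) \<le> norm (g x) * B) F"
    using f
  proof (rule eventually_mono)
    fix x assume "\<bar>f x\<bar> \<le> B"
    then have "\<bar>f x\<bar> * \<bar>g x\<bar> \<le> B * \<bar>g x\<bar>" by (intro mult_right_mono) auto
    then show "norm (f x * g x) \<le> norm (g x) * B" by (simp add: abs_mult mult.commute)
  qed
qed

lemma const_within: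
  fixes f :: "real \<Rightarrow> real"
  assumes iv: "is_interval X" and d: "\<forall>x\<in>X. (f has_real_derivative 0) (at x within X)"
    and x: "x \<in> X" "y \<in> X"
  shows "f x = f y"
proof -
  have d': "\<forall>x\<in>X. ((\<lambda>x. - f x) has_real_derivative (\<lambda>_. - 0) x) (at x within X)"
    using d DERIV_minus by blast
  have d0: "\<forall>x\<in>X. (f has_real_derivative (\<lambda>_. 0) x) (at x within X)" using d by simp
  have *: "f a \<le> f b \<and> - f a \<le> - f b" if "a \<in> X" "b \<in> X" "a \<le> b" for a b
    using mono_within[OF iv d0 _ that] mono_within[OF iv d' _ that] by simp
  show ?thesis
  proof (cases "x \<le> y")
    case True then show ?thesis using *[OF x True] by linarith
  next
    case False then show ?thesis using *[OF x(2) x(1)] by linarith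
  qed
qed

lemma ends:
  fixes X :: "real set" and a u u' u'' :: "real \<Rightarrow> real"
  assumes iv: "is_interval X" and X01: "{0..1} \<subseteq> X" and \<beta>: "\<beta> > 0"
    and ode: "odesol X \<beta> a c u u' u''" and nm: "neum X u'"
    and pos: "\<forall>x\<in>X. u x > 0" and ui: "u integrable_on X"
    and aB: "\<And>M. \<exists>B. \<forall>x\<in>X. \<bar>x\<bar> \<ge> B \<longrightarrow> a x \<le> M"
  shows "rfilt X \<noteq> bot \<and> (\<forall>r<1. eventually (\<lambda>x. x \<in> X \<and> r < x) (rfilt X)) \<and>
           (u' \<longlongrightarrow> 0) (rfilt X) \<and> (\<exists>B. eventually (\<lambda>x. \<bar>u x\<bar> \<le> B) (rfilt X))"
    and "rfilt (uminus ` X) \<noteq> bot \<and> (\<forall>r<0. eventually (\<lambda>y. - y \<in> X \<and> r < y) (rfilt (uminus ` X))) \<and>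
           ((\<lambda>y. u' (- y)) \<longlongrightarrow> 0) (rfilt (uminus ` X)) \<and>
           (\<exists>B. eventually (\<lambda>y. \<bar>u (- y)\<bar> \<le> B) (rfilt (uminus ` X)))"
    and "(u'' has_integral 0) X"
proof -
  have du: "\<forall>x\<in>X. (u has_real_derivative u' x) (at x within X)"
    using ode unfolding odesol_def by auto
  have cu: "continuous_on X u" using cont_of_deriv du by auto
  have nn: "\<forall>x\<in>X. 0 \<le> u x" using pos by (simp add: less_imp_le)
  have intb: "integral {l..r} u \<le> integral X u" if lr: "{l..r} \<subseteq> X" for l r
    by (rule integral_subset_le[OF lr _ ui nn]) (rule integrable_continuous_interval[OF continuous_on_subset[OF cu lr]])
  have aR: "\<exists>R. \<forall>x\<in>X. x \<ge> R \<longrightarrow> a x \<le> M" for M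
  proof -
    obtain B where B: "\<forall>x\<in>X. \<bar>x\<bar> \<ge> B \<longrightarrow> a x \<le> M" using aB by blast
    show ?thesis by (rule exI[of _ "\<bar>B\<bar>"]) (use B in auto)
  qed
  have R: "(rfilt X \<noteq> bot \<and> (\<forall>r<1. eventually (\<lambda>x. x \<in> X \<and> r < x) (rfilt X)) \<and> (u' \<longlongrightarrow> 0) (rfilt X) \<and>
            (\<exists>B. eventually (\<lambda>x. \<bar>u x\<bar> \<le> B) (rfilt X))) \<and>
         (u'' has_integral (- u' (1/2))) (X \<inter> {1/2..})"
    by (rule right_end[OF iv _ _ \<beta> ode nm pos intb aR]) (use X01 in auto)
  have iv': "is_interval (uminus ` X)" using iv by simp
  have sub': "{-1/2..0} \<subseteq> uminus ` X"
  proof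
    fix x :: real assume "x \<in> {-1/2..0}"
    then have "-x \<in> {0..1}" by auto
    then have "-x \<in> X" using X01 by blast
    then show "x \<in> uminus ` X" by simp
  qed
  note ode' = reflect_ode[OF ode]
  note nm' = reflect_neum[OF nm]
  have pos': "\<forall>y\<in>uminus ` X. u (- y) > 0" using pos by auto
  have intb': "integral {l..r} (\<lambda>x. u (- x)) \<le> integral X u" if lr: "{l..r} \<subseteq> uminus ` X" for l r
  proof -
    have sub: "{-r..-l} \<subseteq> X"
    proof
      fix x assume "x \<in> {-r..-l}"
      then have "- x \<in> {l..r}" by auto
      then show "x \<in> X" using lr by auto
    qed
    have "integral {l..r} (\<lambda>x. u (- x)) = integral {-r..-l} u"
      using Henstock_Kurzweil_Integration.integral_reflect_real[where a="-r" and b="-l" and f=u] by simp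
    then show ?thesis using intb[OF sub] by simp
  qed
  have aR': "\<exists>R. \<forall>y\<in>uminus ` X. y \<ge> R \<longrightarrow> a (- y) \<le> M" for M
  proof -
    obtain B where B: "\<forall>x\<in>X. \<bar>x\<bar> \<ge> B \<longrightarrow> a x \<le> M" using aB by blast
    show ?thesis by (rule exI[of _ "\<bar>B\<bar>"]) (use B in auto)
  qed
  have L: "(rfilt (uminus ` X) \<noteq> bot \<and> (\<forall>r<0. eventually (\<lambda>x. x \<in> uminus ` X \<and> r < x) (rfilt (uminus ` X))) \<and>
            ((\<lambda>x. - u' (- x)) \<longlongrightarrow> 0) (rfilt (uminus ` X)) \<and>
            (\<exists>B. eventually (\<lambda>x. \<bar>u (- x)\<bar> \<le> B) (rfilt (uminus ` X)))) \<and>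
         ((\<lambda>x. u'' (- x)) has_integral (- (- u' (- (-1/2))))) (uminus ` X \<inter> {-1/2..})"
    by (rule right_end[OF iv' _ _ \<beta> ode' nm' pos' intb' aR']) (use sub' in auto)
  show "rfilt X \<noteq> bot \<and> (\<forall>r<1. eventually (\<lambda>x. x \<in> X \<and> r < x) (rfilt X)) \<and>
           (u' \<longlongrightarrow> 0) (rfilt X) \<and> (\<exists>B. eventually (\<lambda>x. \<bar>u x\<bar> \<le> B) (rfilt X))"
    using R by blast
  have Llim: "((\<lambda>y. u' (- y)) \<longlongrightarrow> 0) (rfilt (uminus ` X))"
    using tendsto_minus[OF conjunct1[OF conjunct2[OF conjunct2[OF conjunct1[OF L]]]]] by simp
  show "rfilt (uminus ` X) \<noteq> bot \<and> (\<forall>r<0. eventually (\<lambda>y. - y \<in> X \<and> r < y) (rfilt (uminus ` X))) \<and>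
           ((\<lambda>y. u' (- y)) \<longlongrightarrow> 0) (rfilt (uminus ` X)) \<and>
           (\<exists>B. eventually (\<lambda>y. \<bar>u (- y)\<bar> \<le> B) (rfilt (uminus ` X)))"
    using L Llim by simp
  have IR: "(u'' has_integral (- u' (1/2))) (X \<inter> {1/2..})" using R by blast
  have IL0: "((\<lambda>x. u'' (- x)) has_integral (u' (1/2))) (uminus ` X \<inter> {-1/2..})" using L by simp
  have IL1: "((\<lambda>x. u'' (- (- x))) has_integral (u' (1/2))) (uminus ` (uminus ` X \<inter> {-1/2..}))"
    by (rule reflect_integral[OF IL0])
  have "uminus ` (uminus ` X \<inter> {-1/2..}) = X \<inter> {..1/2}" by auto
  with IL1 have IL: "(u'' has_integral (u' (1/2))) (X \<inter> {..1/2})" by simp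
  have "(u'' has_integral (- u' (1/2) + u' (1/2))) (X \<inter> {1/2..} \<union> X \<inter> {..1/2})"
  proof (rule has_integral_Un[OF IR IL])
    have "X \<inter> {1/2..} \<inter> (X \<inter> {..1/2}) \<subseteq> {1/2}" by auto
    then show "negligible (X \<inter> {1/2..} \<inter> (X \<inter> {..1/2}))" by (rule negligible_subset[OF negligible_sing])
  qed
  moreover have "X \<inter> {1/2..} \<union> X \<inter> {..1/2} = X" by auto
  ultimately show "(u'' has_integral 0) X" by simp
qed

theorem theorem1:
  fixes X :: "real set" and \<beta> K :: real and a psi :: "real \<Rightarrow> real"
  assumes "is_interval X" and "{0..1} \<subseteq> X"
    and "\<beta> > 0" and "K > 0"
    and "continuous_on X a"
    and "\<forall>x\<in>X. a x \<le> a 0" and "a 0 > a 1" and "a 1 > 0"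
    and "filterlim a at_bot (inf at_infinity (principal X))"
    and "principal_value X \<beta> a < 0"
    and "principal_eigenfunction X \<beta> a psi"
  shows "(\<lambda>x. a x * psi x) integrable_on X \<and>
         steady_state X \<beta> a K (\<lambda>x. K * integral X (\<lambda>y. a y * psi y) * psi x) \<and>
         (\<forall>s. steady_state X \<beta> a K s \<longrightarrow>
              (\<forall>x\<in>X. s x = K * integral X (\<lambda>y. a y * psi y) * psi x))"
proof -
  define lam where "lam = principal_value X \<beta> a"
  have \<beta>: "\<beta> > 0" and K: "K > 0" using assms by auto
  obtain p' p'' where odep: "odesol X \<beta> a (- lam) psi p' p''" and np: "neum X p'"
    using assms(11) unfolding principal_eigenfunction_def neumann_sol_iff lam_def by blast
  have ppos: "\<forall>x\<in>X. psi x > 0" and pint: "psi integrable_on X" and p1: "integral X psi = 1"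
    using assms(11) unfolding principal_eigenfunction_def by auto
  have h1: "(psi has_integral 1) X" using integrable_integral[OF pint] p1 by simp
  have aB: "\<exists>B. \<forall>x\<in>X. \<bar>x\<bar> \<ge> B \<longrightarrow> a x \<le> M" for M
  proof -
    have "eventually (\<lambda>x. a x \<le> M) (inf at_infinity (principal X))"
      using assms(9) unfolding filterlim_at_bot by blast
    then have "eventually (\<lambda>x. x \<in> X \<longrightarrow> a x \<le> M) at_infinity" by (simp add: eventually_inf_principal)
    then obtain B where "\<forall>x. B \<le> norm x \<longrightarrow> (x \<in> X \<longrightarrow> a x \<le> M)" unfolding eventually_at_infinity by blast
    then show ?thesis by auto
  qed
  have X01: "{0..1} \<subseteq> X" by (rule assms(2))
  note Ep = ends[OF assms(1) X01 \<beta> odep np ppos pint aB]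
  have eqp: "\<beta> * p'' x + a x * psi x + lam * psi x = 0" if "x \<in> X" for x
    using odep that unfolding odesol_def by (auto simp: algebra_simps)
  have hai: "((\<lambda>x. a x * psi x) has_integral (- lam)) X"
  proof -
    have "((\<lambda>x. (- lam) * psi x - \<beta> * p'' x) has_integral ((- lam) * 1 - \<beta> * 0)) X"
      by (intro has_integral_diff has_integral_mult_right h1 Ep(3))
    moreover have "(- lam) * psi x - \<beta> * p'' x = a x * psi x" if "x \<in> X" for x
      using eqp[OF that] by linarith
    ultimately show ?thesis using has_integral_eq[of X "\<lambda>x. (- lam) * psi x - \<beta> * p'' x" "\<lambda>x. a x * psi x"] by simp
  qed
  have aint: "(\<lambda>x. a x * psi x) integrable_on X" using hai by blast
  define A where "A = integral X (\<lambda>y. a y * psi y)"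
  have Aeq: "A = - lam" unfolding A_def using hai by (rule integral_unique)
  have Apos: "A > 0" using Aeq assms(10) lam_def by simp
  have st: "steady_state X \<beta> a K (\<lambda>x. K * A * psi x)"
    unfolding steady_state_def
  proof (intro conjI)
    have hs: "((\<lambda>x. (K * A) * psi x) has_integral (K * A) * 1) X" by (rule has_integral_mult_right[OF h1])
    show "(\<lambda>x. K * A * psi x) integrable_on X" using hs by blast
    have IS: "integral X (\<lambda>x. K * A * psi x) = K * A" using integral_unique[OF hs] by simp
    show "\<forall>x\<in>X. K * A * psi x > 0" using ppos Apos K by simp
    show "integral X (\<lambda>x. K * A * psi x) > 0" using IS Apos K by simp
    have c: "K * A / K = - lam" using K Aeq by simp
    show "neumann_sol X \<beta> a (integral X (\<lambda>x. K * A * psi x) / K) (\<lambda>x. K * A * psi x)"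
      unfolding neumann_sol_iff IS c
    proof (intro exI conjI)
      show "odesol X \<beta> a (- lam) (\<lambda>x. K * A * psi x) (\<lambda>x. K * A * p' x) (\<lambda>x. K * A * p'' x)"
        unfolding odesol_def
      proof
        fix x assume x: "x \<in> X"
        have d1: "(psi has_real_derivative p' x) (at x within X)"
          and d2: "(p' has_real_derivative p'' x) (at x within X)"
          and e: "\<beta> * p'' x + (a x - - lam) * psi x = 0"
          using odep x unfolding odesol_def by auto
        have e2: "\<beta> * (K * A * p'' x) + (a x - - lam) * (K * A * psi x) = (K * A) * (\<beta> * p'' x + (a x - - lam) * psi x)"
          by (simp add: algebra_simps)
        show "((\<lambda>x. K * A * psi x) has_real_derivative K * A * p' x) (at x within X) \<and>
              ((\<lambda>x. K * A * p' x) has_real_derivative K * A * p'' x) (at x within X) \<and>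
              \<beta> * (K * A * p'' x) + (a x - - lam) * (K * A * psi x) = 0"
          using DERIV_cmult[OF d1, of "K * A"] DERIV_cmult[OF d2, of "K * A"] e2 e by simp
      qed
      show "neum X (\<lambda>x. K * A * p' x)"
        unfolding neum_def
      proof
        fix e assume "e \<in> frontier X"
        then have "(p' \<longlongrightarrow> 0) (at e within X)" using np unfolding neum_def by blast
        from tendsto_mult[OF tendsto_const this, of "K * A"]
        show "((\<lambda>x. K * A * p' x) \<longlongrightarrow> 0) (at e within X)" by simp
      qed
    qed
  qed
  have uniq: "\<forall>x\<in>X. s x = K * A * psi x" if ss: "steady_state X \<beta> a K s" for s
  proof -
    define S where "S = integral X s"
    define c where "c = S / K"
    have sint: "s integrable_on X" and spos: "\<forall>x\<in>X. s x > 0" and Spos: "S > 0"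
      and ns: "neumann_sol X \<beta> a c s"
      using ss unfolding steady_state_def S_def c_def by auto
    obtain s' s'' where odes: "odesol X \<beta> a c s s' s''" and nms: "neum X s'"
      using ns unfolding neumann_sol_iff by blast
    note Es = ends[OF assms(1) X01 \<beta> odes nms spos sint aB]
    define W where "W x = psi x * s' x - p' x * s x" for x
    have Weq: "W = (\<lambda>x. psi x * s' x - p' x * s x)" by (simp add: W_def fun_eq_iff)
    have dW: "\<forall>x\<in>X. (W has_real_derivative (psi x * s x * (c + lam) / \<beta>)) (at x within X)"
    proof
      fix x assume x: "x \<in> X"
      have dp: "(psi has_real_derivative p' x) (at x within X)"
        and dp': "(p' has_real_derivative p'' x) (at x within X)"
        and ep: "\<beta> * p'' x + (a x - - lam) * psi x = 0"
        using odep x unfolding odesol_def by auto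
      have ds: "(s has_real_derivative s' x) (at x within X)"
        and ds': "(s' has_real_derivative s'' x) (at x within X)"
        and es: "\<beta> * s'' x + (a x - c) * s x = 0"
        using odes x unfolding odesol_def by auto
      have D: "(W has_real_derivative (p' x * s' x + s'' x * psi x - (p'' x * s x + s' x * p' x))) (at x within X)"
        unfolding Weq by (rule DERIV_diff[OF DERIV_mult[OF dp ds'] DERIV_mult[OF dp' ds]])
      have e1: "\<beta> * s'' x = - ((a x - c) * s x)" using es by linarith
      have e2: "\<beta> * p'' x = - ((a x - - lam) * psi x)" using ep by linarith
      have "(p' x * s' x + s'' x * psi x - (p'' x * s x + s' x * p' x)) * \<beta> = psi x * (\<beta> * s'' x) - (\<beta> * p'' x) * s x"
        by (simp add: algebra_simps)
      also have "\<dots> = psi x * s x * (c + lam)" unfolding e1 e2 by (simp add: algebra_simps)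
      finally have "(p' x * s' x + s'' x * psi x - (p'' x * s x + s' x * p' x)) = psi x * s x * (c + lam) / \<beta>"
        using \<beta> by (simp add: eq_divide_eq)
      with D show "(W has_real_derivative (psi x * s x * (c + lam) / \<beta>)) (at x within X)" by simp
    qed
    have Wlim: "(W \<longlongrightarrow> 0) (rfilt X)"
    proof -
      obtain B1 where B1: "eventually (\<lambda>x. \<bar>psi x\<bar> \<le> B1) (rfilt X)" using Ep(1) by blast
      obtain B2 where B2: "eventually (\<lambda>x. \<bar>s x\<bar> \<le> B2) (rfilt X)" using Es(1) by blast
      have "((\<lambda>x. psi x * s' x) \<longlongrightarrow> 0) (rfilt X)" using bdd_mult_zero[OF _ B1] Es(1) by blast
      moreover have "((\<lambda>x. s x * p' x) \<longlongrightarrow> 0) (rfilt X)" using bdd_mult_zero[OF _ B2] Ep(1) by blast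
      ultimately have "((\<lambda>x. psi x * s' x - s x * p' x) \<longlongrightarrow> 0 - 0) (rfilt X)" by (rule tendsto_diff)
      then have "((\<lambda>x. psi x * s' x - p' x * s x) \<longlongrightarrow> 0) (rfilt X)" by (simp add: mult.commute)
      then show ?thesis unfolding Weq .
    qed
    have WlimL: "((\<lambda>y. W (- y)) \<longlongrightarrow> 0) (rfilt (uminus ` X))"
    proof -
      obtain B1 where B1: "eventually (\<lambda>y. \<bar>psi (- y)\<bar> \<le> B1) (rfilt (uminus ` X))" using Ep(2) by blast
      obtain B2 where B2: "eventually (\<lambda>y. \<bar>s (- y)\<bar> \<le> B2) (rfilt (uminus ` X))" using Es(2) by blast
      have "((\<lambda>y. psi (- y) * s' (- y)) \<longlongrightarrow> 0) (rfilt (uminus ` X))" using bdd_mult_zero[OF _ B1] Es(2) by blast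
      moreover have "((\<lambda>y. s (- y) * p' (- y)) \<longlongrightarrow> 0) (rfilt (uminus ` X))" using bdd_mult_zero[OF _ B2] Ep(2) by blast
      ultimately have "((\<lambda>y. psi (- y) * s' (- y) - s (- y) * p' (- y)) \<longlongrightarrow> 0 - 0) (rfilt (uminus ` X))" by (rule tendsto_diff)
      then have "((\<lambda>y. psi (- y) * s' (- y) - p' (- y) * s (- y)) \<longlongrightarrow> 0) (rfilt (uminus ` X))" by (simp add: mult.commute)
      then show ?thesis unfolding Weq .
    qed
    have x14: "1/4 \<in> X" "3/4 \<in> X" using X01 by auto
    have clam: "c + lam = 0"
    proof (rule ccontr)
      assume ne: "c + lam \<noteq> 0"
      define V where "V x = (c + lam) * W x" for x
      have Veq: "V = (\<lambda>x. (c + lam) * W x)" by (simp add: V_def fun_eq_iff)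
      have dV: "\<forall>x\<in>X. (V has_real_derivative ((\<lambda>x. (c + lam) * (psi x * s x * (c + lam) / \<beta>)) x)) (at x within X)"
        unfolding Veq using dW DERIV_cmult by blast
      have Vpos: "\<forall>x\<in>X. (\<lambda>x. (c + lam) * (psi x * s x * (c + lam) / \<beta>)) x > 0"
      proof
        fix x assume x: "x \<in> X"
        have "psi x * s x > 0" using ppos spos x by simp
        moreover have "(c + lam) * (c + lam) > 0"
        proof -
          have "(c + lam)^2 > 0" using ne by simp
          then show ?thesis by (simp add: power2_eq_square)
        qed
        ultimately have pp: "((c + lam) * (c + lam)) * (psi x * s x) / \<beta> > 0" using \<beta> by simp
        have eq: "(c + lam) * (psi x * s x * (c + lam) / \<beta>) = ((c + lam) * (c + lam)) * (psi x * s x) / \<beta>"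
          by (simp add: mult_ac)
        from pp show "(\<lambda>x. (c + lam) * (psi x * s x * (c + lam) / \<beta>)) x > 0" by (simp only: eq)
      qed
      have Vlt: "V (1/4) < V (3/4)" by (rule smono_within[OF assms(1) dV Vpos x14]) simp
      have Vlim: "(V \<longlongrightarrow> 0) (rfilt X)"
        using tendsto_mult[OF tendsto_const Wlim, of "c + lam"] unfolding Veq by simp
      have "V (3/4) \<le> 0"
      proof (rule tendsto_lowerbound[OF Vlim])
        have evR: "\<forall>r<1. eventually (\<lambda>x. x \<in> X \<and> r < x) (rfilt X)" using Ep(1) by blast
        have "(3/4::real) < 1" by simp
        with evR have "eventually (\<lambda>x. x \<in> X \<and> 3/4 < x) (rfilt X)" by blast
        then show "eventually (\<lambda>x. V (3/4) \<le> V x) (rfilt X)"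
          by (rule eventually_mono) (use smono_within[OF assms(1) dV Vpos x14(2)] in \<open>auto intro: less_imp_le\<close>)
        show "rfilt X \<noteq> bot" using Ep(1) by blast
      qed
      moreover have "0 \<le> V (1/4)"
      proof (rule tendsto_upperbound)
        show "((\<lambda>y. V (- y)) \<longlongrightarrow> 0) (rfilt (uminus ` X))"
          using tendsto_mult[OF tendsto_const WlimL, of "c + lam"] unfolding Veq by simp
        have evL: "\<forall>r<0. eventually (\<lambda>y. - y \<in> X \<and> r < y) (rfilt (uminus ` X))" using Ep(2) by blast
        have "- (1/4::real) < 0" by simp
        with evL have "eventually (\<lambda>y. - y \<in> X \<and> - (1/4) < y) (rfilt (uminus ` X))" by blast
        then show "eventually (\<lambda>y. V (- y) \<le> V (1/4)) (rfilt (uminus ` X))"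
          by (rule eventually_mono) (use smono_within[OF assms(1) dV Vpos _ x14(1)] in \<open>auto intro: less_imp_le\<close>)
        show "rfilt (uminus ` X) \<noteq> bot" using Ep(2) by blast
      qed
      ultimately show False using Vlt by linarith
    qed
    have d0: "\<forall>x\<in>X. (W has_real_derivative 0) (at x within X)" using dW clam by simp
    have W0: "W x = 0" if x: "x \<in> X" for x
    proof -
      have "eventually (\<lambda>y. W x = W y) (rfilt X)"
      proof -
        have evR: "\<forall>r<1. eventually (\<lambda>x. x \<in> X \<and> r < x) (rfilt X)" using Ep(1) by blast
        have "(0::real) < 1" by simp
        with evR have "eventually (\<lambda>y. y \<in> X \<and> 0 < y) (rfilt X)" by blast
        then show ?thesis by (rule eventually_mono) (use const_within[OF assms(1) d0 x] in blast)
      qed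
      then have ev2: "eventually (\<lambda>y. W y = W x) (rfilt X)" by (rule eventually_mono) simp
      have "((\<lambda>y. W x) \<longlongrightarrow> 0) (rfilt X)" by (rule Lim_transform_eventually[OF Wlim ev2])
      moreover have "rfilt X \<noteq> bot" using Ep(1) by blast
      ultimately show ?thesis using tendsto_const_iff by blast
    qed
    have dr: "\<forall>x\<in>X. ((\<lambda>x. s x / psi x) has_real_derivative 0) (at x within X)"
    proof
      fix x assume x: "x \<in> X"
      have dp: "(psi has_real_derivative p' x) (at x within X)"
        using odep x unfolding odesol_def by auto
      have ds: "(s has_real_derivative s' x) (at x within X)"
        using odes x unfolding odesol_def by auto
      have "psi x \<noteq> 0" using ppos x by auto
      from DERIV_divide[OF ds dp this]
      have "((\<lambda>x. s x / psi x) has_real_derivative (s' x * psi x - s x * p' x) / (psi x * psi x)) (at x within X)" .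
      moreover have "s' x * psi x - s x * p' x = W x" by (simp add: W_def mult.commute)
      ultimately show "((\<lambda>x. s x / psi x) has_real_derivative 0) (at x within X)" using W0[OF x] by simp
    qed
    define k where "k = s (1/2) / psi (1/2)"
    have half: "1/2 \<in> X" using X01 by auto
    have sk: "s x = k * psi x" if x: "x \<in> X" for x
    proof -
      have "s x / psi x = k" unfolding k_def by (rule const_within[OF assms(1) dr x half])
      moreover have "psi x \<noteq> 0" using ppos x by auto
      ultimately show ?thesis by (simp add: field_simps)
    qed
    have "S = integral X (\<lambda>x. k * psi x)" unfolding S_def by (rule integral_cong) (use sk in auto)
    also have "\<dots> = k" using integral_unique[OF has_integral_mult_right[OF h1, of k]] by simp
    finally have Sk: "S = k" .
    have "c = - lam" using clam by linarith
    then have "S = K * A" using c_def Aeq K by (simp add: field_simps)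
    then show ?thesis using sk Sk by simp
  qed
  show ?thesis unfolding A_def[symmetric] using aint st uniq by blast
qed

end
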